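(* Let $(\mathcal{X},d)$ be a finite metric space $\mathcal{X}=\{x_0,\dots,x_n\}$ ($n\ge1$, pairwise distinct points), let $(\mathcal{Y},\|\cdot\|)$ be a non-trivial, strictly convex real Banach space, let $y\in\operatorname{Lip}^1_0$ and let $v\in\mathcal{Y}$ with $\|v\|=1$. Define $D=\{t=(t_0,\dots,t_n)\in\mathbb{R}^{n+1} : (y_0+t_0v,\dots,y_n+t_nv)\in\operatorname{Lip}^1_0\}$. Then $D$ is a nonempty, convex, compact subset of $\{0\}\times\mathbb{R}^n$, and for every extreme point $t\in\operatorname{ext}(D)$ the point $(y_0+t_0v,\dots,y_n+t_nv)$ is an extreme point of $\operatorname{Lip}^1_0$.
   Context: $\operatorname{Lip}^1_0$ denotes the set of all $y=(y_0,\dots,y_n)\in\mathcal{Y}^{n+1}$ with $y_0=0$ and $\|y_i-y_j\|\le d(x_i,x_j)$ for all $i,j\in\{0,1,\dots,n\}$. $\operatorname{ext}(C)$ denotes the set of extreme points of a convex set $C$. *)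

theory Defs
  imports "HOL-Analysis.Analysis"
begin

text \<open>Tuples (z_0,...,z_n) in V^(n+1) are represented as functions nat => V
  that vanish outside {0..n}.\<close>

definition strictly_convex_space :: "'b::real_normed_vector itself \<Rightarrow> bool" where
  "strictly_convex_space _ \<longleftrightarrow>
     (\<forall>u v::'b. norm u = 1 \<longrightarrow> norm v = 1 \<longrightarrow> u \<noteq> v \<longrightarrow> norm ((1/2) *\<^sub>R (u + v)) < 1)"

definition Lip10 :: "(nat \<Rightarrow> 'a::metric_space) \<Rightarrow> nat \<Rightarrow> (nat \<Rightarrow> 'b::real_normed_vector) set" where
  "Lip10 x n = {y. y 0 = 0 \<and> (\<forall>i>n. y i = 0) \<and>
      (\<forall>i\<le>n. \<forall>j\<le>n. norm (y i - y j) \<le> dist (x i) (x j))}"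

definition tuple_convex :: "(nat \<Rightarrow> 'b::real_vector) set \<Rightarrow> bool" where
  "tuple_convex S \<longleftrightarrow> (\<forall>a\<in>S. \<forall>b\<in>S. \<forall>u::real. 0 \<le> u \<longrightarrow> u \<le> 1 \<longrightarrow>
      (\<lambda>i. (1 - u) *\<^sub>R a i + u *\<^sub>R b i) \<in> S)"

definition tuple_extreme_point :: "(nat \<Rightarrow> 'b::real_vector) \<Rightarrow> (nat \<Rightarrow> 'b) set \<Rightarrow> bool" where
  "tuple_extreme_point z S \<longleftrightarrow> z \<in> S \<and>
     (\<forall>a\<in>S. \<forall>b\<in>S. \<forall>u::real. 0 < u \<longrightarrow> u < 1 \<longrightarrow>
        z = (\<lambda>i. (1 - u) *\<^sub>R a i + u *\<^sub>R b i) \<longrightarrow> a = b)"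

end

theory Submission
  imports Defs
begin

lemma sc_comb:
  fixes p q :: "'b::real_normed_vector"
  assumes sc: "strictly_convex_space TYPE('b)"
    and p: "norm p \<le> 1" and q: "norm q \<le> 1" and u: "0 < u" "u < 1"
    and e: "norm ((1-u) *\<^sub>R p + u *\<^sub>R q) = 1"
  shows "p = q"
proof (rule ccontr)
  assume ne: "p \<noteq> q"
  have tri: "1 \<le> (1-u) * norm p + u * norm q"
    using e norm_triangle_ineq[of "(1-u) *\<^sub>R p" "u *\<^sub>R q"] u by simp
  have a1: "(1-u) * norm p \<le> (1-u)" using p u by (simp add: mult_left_le)
  have a2: "u * norm q \<le> u" using q u by (simp add: mult_left_le)
  have np: "norm p = 1"
  proof (rule ccontr)
    assume "norm p \<noteq> 1" hence "norm p < 1" using p by simp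
    hence "(1-u) * norm p < (1-u)" using u by simp
    thus False using tri a2 by simp
  qed
  have nq: "norm q = 1"
  proof (rule ccontr)
    assume "norm q \<noteq> 1" hence "norm q < 1" using q by simp
    hence "u * norm q < u" using u by simp
    thus False using tri a1 by simp
  qed
  define m where "m = (1/2) *\<^sub>R (p + q)"
  have mlt: "norm m < 1" using sc np nq ne unfolding strictly_convex_space_def m_def by blast
  show False
  proof (cases "u \<ge> 1/2")
    case True
    define l where "l = 2*(1-u)"
    have eq: "(1-u) *\<^sub>R p + u *\<^sub>R q = l *\<^sub>R m + (1-l) *\<^sub>R q"
      unfolding l_def m_def by (simp add: algebra_simps scaleR_add_right flip: scaleR_add_left)
    have "1 \<le> norm (l *\<^sub>R m) + norm ((1-l) *\<^sub>R q)"
      using e eq norm_triangle_ineq by metis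
    also have "\<dots> = l * norm m + (1-l)" using True u nq unfolding l_def by simp
    finally have "1 \<le> l * norm m + (1 - l)" .
    moreover have "l > 0" using u unfolding l_def by simp
    ultimately have "l * 1 \<le> l * norm m" by simp
    hence "1 \<le> norm m" using \<open>l > 0\<close> mult_le_cancel_left_pos[of l 1 "norm m"] by simp
    thus False using mlt by simp
  next
    case False
    define l where "l = 2*u"
    have eq: "(1-u) *\<^sub>R p + u *\<^sub>R q = l *\<^sub>R m + (1-l) *\<^sub>R p"
      unfolding l_def m_def by (simp add: algebra_simps scaleR_add_right flip: scaleR_add_left)
    have "1 \<le> norm (l *\<^sub>R m) + norm ((1-l) *\<^sub>R p)"
      using e eq norm_triangle_ineq by metis
    also have "\<dots> = l * norm m + (1-l)" using False u np unfolding l_def by simp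
    finally have "1 \<le> l * norm m + (1 - l)" .
    moreover have "l > 0" using u unfolding l_def by simp
    ultimately have "l * 1 \<le> l * norm m" by simp
    hence "1 \<le> norm m" using \<open>l > 0\<close> mult_le_cancel_left_pos[of l 1 "norm m"] by simp
    thus False using mlt by simp
  qed
qed

lemma fin_pos:
  fixes f :: "'c \<Rightarrow> real"
  shows "finite A \<Longrightarrow> (\<forall>a\<in>A. 0 < f a) \<Longrightarrow> \<exists>e>0. \<forall>a\<in>A. e \<le> f a"
proof (induction A rule: finite_induct)
  case empty then show ?case by (intro exI[of _ 1]) auto
next
  case (insert a A)
  then obtain e where "e > 0" "\<forall>b\<in>A. e \<le> f b" by auto
  then show ?case using insert.prems by (intro exI[of _ "min e (f a)"]) auto
qed

theorem mainTheorem4: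
  fixes x :: "nat \<Rightarrow> 'a::metric_space" and n :: nat
    and y :: "nat \<Rightarrow> 'b::banach" and v :: 'b
    and D :: "(nat \<Rightarrow> real) set"
  assumes "n \<ge> 1"
    and "inj_on x {0..n}"
    and "\<exists>z::'b. z \<noteq> 0"
    and "strictly_convex_space TYPE('b)"
    and "y \<in> Lip10 x n"
    and "norm v = 1"
    and "D = {t. (\<forall>i>n. t i = 0) \<and> (\<lambda>i. y i + t i *\<^sub>R v) \<in> Lip10 x n}"
  shows "D \<noteq> {} \<and> tuple_convex D \<and> compact D \<and> D \<subseteq> {t. t 0 = 0}
     \<and> (\<forall>t. tuple_extreme_point t D \<longrightarrow>
            tuple_extreme_point (\<lambda>i. y i + t i *\<^sub>R v) (Lip10 x n))"
proof -
  note inj = assms(2) and sc = assms(4) and yL = assms(5) and nv = assms(6) and Dd = assms(7)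
  have y0: "y 0 = 0" and yn: "\<And>i. i > n \<Longrightarrow> y i = 0"
    and yl: "\<And>i j. i \<le> n \<Longrightarrow> j \<le> n \<Longrightarrow> norm (y i - y j) \<le> dist (x i) (x j)"
    using yL unfolding Lip10_def by auto
  have memD: "t \<in> D \<longleftrightarrow> (\<forall>i>n. t i = 0) \<and> t 0 = 0 \<and>
      (\<forall>i\<le>n. \<forall>j\<le>n. norm ((y i + t i *\<^sub>R v) - (y j + t j *\<^sub>R v)) \<le> dist (x i) (x j))" for t
    using nv yn y0 unfolding Dd Lip10_def by auto
  have ne: "D \<noteq> {}"
  proof -
    have "(\<lambda>i. 0) \<in> D" using yl unfolding memD by simp
    thus ?thesis by blast
  qed
  have conv: "tuple_convex D"
    unfolding tuple_convex_def
  proof (intro ballI allI impI)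
    fix a b and u :: real
    assume a: "a \<in> D" and b: "b \<in> D" and u: "0 \<le> u" "u \<le> 1"
    show "(\<lambda>i. (1 - u) *\<^sub>R a i + u *\<^sub>R b i) \<in> D"
      unfolding memD
    proof (intro conjI allI impI)
      fix i j assume i: "i \<le> n" and j: "j \<le> n"
      have e: "(y i + ((1 - u) *\<^sub>R a i + u *\<^sub>R b i) *\<^sub>R v) - (y j + ((1 - u) *\<^sub>R a j + u *\<^sub>R b j) *\<^sub>R v)
        = (1-u) *\<^sub>R ((y i + a i *\<^sub>R v) - (y j + a j *\<^sub>R v)) + u *\<^sub>R ((y i + b i *\<^sub>R v) - (y j + b j *\<^sub>R v))"
        by (simp add: algebra_simps)
      have "norm ((1-u) *\<^sub>R ((y i + a i *\<^sub>R v) - (y j + a j *\<^sub>R v)) + u *\<^sub>R ((y i + b i *\<^sub>R v) - (y j + b j *\<^sub>R v)))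
          \<le> (1-u) * norm ((y i + a i *\<^sub>R v) - (y j + a j *\<^sub>R v)) + u * norm ((y i + b i *\<^sub>R v) - (y j + b j *\<^sub>R v))"
        by (rule order_trans[OF norm_triangle_ineq]) (use u in simp)
      also have "\<dots> \<le> (1-u) * dist (x i) (x j) + u * dist (x i) (x j)"
      proof -
        have ha: "norm ((y i + a i *\<^sub>R v) - (y j + a j *\<^sub>R v)) \<le> dist (x i) (x j)"
          using a i j unfolding memD by blast
        have hb: "norm ((y i + b i *\<^sub>R v) - (y j + b j *\<^sub>R v)) \<le> dist (x i) (x j)"
          using b i j unfolding memD by blast
        show ?thesis using u by (intro add_mono[OF mult_left_mono[OF ha] mult_left_mono[OF hb]]) auto
      qed
      finally show "norm ((y i + ((1 - u) *\<^sub>R a i + u *\<^sub>R b i) *\<^sub>R v) - (y j + ((1 - u) *\<^sub>R a j + u *\<^sub>R b j) *\<^sub>R v)) \<le> dist (x i) (x j)"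
        unfolding e by (simp add: algebra_simps)
    qed (use a b in \<open>auto simp: memD\<close>)
  qed
  have sub: "D \<subseteq> {t. t 0 = 0}" using memD by auto
  have cpt: "compact D"
  proof -
    let ?K = "PiE UNIV (\<lambda>i::nat. cball (0::real) (2 * dist (x i) (x 0)))"
    have cK: "compact ?K"
      using compactin_PiE[of "\<lambda>i. euclidean" UNIV "\<lambda>i::nat. cball (0::real) (2 * dist (x i) (x 0))"]
      by (simp add: euclidean_product_topology)
    have DK: "D \<subseteq> ?K"
    proof
      fix t assume t: "t \<in> D"
      have "t i \<in> cball 0 (2 * dist (x i) (x 0))" for i
      proof (cases "i \<le> n")
        case True
        have "norm ((y i + t i *\<^sub>R v) - (y 0 + t 0 *\<^sub>R v)) \<le> dist (x i) (x 0)"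
          using t True le0 unfolding memD by blast
        hence h1: "norm (y i + t i *\<^sub>R v) \<le> dist (x i) (x 0)" using t y0 unfolding memD by auto
        have h2: "norm (y i) \<le> dist (x i) (x 0)" using yl[OF True, of 0] y0 by simp
        have "\<bar>t i\<bar> = norm ((y i + t i *\<^sub>R v) - y i)" using nv by simp
        also have "\<dots> \<le> norm (y i + t i *\<^sub>R v) + norm (y i)" by (rule norm_triangle_ineq4)
        finally show ?thesis using h1 h2 by simp
      next
        case False thus ?thesis using t unfolding memD by auto
      qed
      thus "t \<in> ?K" by auto
    qed
    have cl: "closed D"
    proof -
      have cc: "continuous_on UNIV (\<lambda>t::nat\<Rightarrow>real. t i)" for i
        by (rule continuous_on_product_then_coordinatewise[OF continuous_on_id])
      have eqD: "D = {t. \<forall>i. n < i \<longrightarrow> t i = 0} \<inter> {t. t 0 = 0} \<inter>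
        {t. \<forall>i. i \<le> n \<longrightarrow> (\<forall>j. j \<le> n \<longrightarrow> norm ((y i + t i *\<^sub>R v) - (y j + t j *\<^sub>R v)) \<le> dist (x i) (x j))}"
        by (auto simp: memD)
      show ?thesis unfolding eqD
        apply (intro closed_Int closed_Collect_all closed_Collect_imp closed_Collect_eq closed_Collect_le
            continuous_intros cc closed_Collect_const)
        apply (simp_all add: Collect_const)
        done
    qed
    show ?thesis using cK DK cl by (metis closed_Int_compact inf.orderE)
  qed
  have ext: "tuple_extreme_point (\<lambda>i. y i + t i *\<^sub>R v) (Lip10 x n)" if te: "tuple_extreme_point t D" for t
  proof -
    define z where "z = (\<lambda>i. y i + t i *\<^sub>R v)"
    have tD: "t \<in> D" using te unfolding tuple_extreme_point_def by auto
    have zL: "z \<in> Lip10 x n" using tD unfolding Dd z_def by auto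
    have zl: "\<And>i j. i \<le> n \<Longrightarrow> j \<le> n \<Longrightarrow> norm (z i - z j) \<le> dist (x i) (x j)"
      using zL unfolding Lip10_def by auto
    define E where "E = {(i,j). i \<le> n \<and> j \<le> n \<and> norm (z i - z j) = dist (x i) (x j)}"
    define R where "R = {k. (0,k) \<in> E\<^sup>*}"
    have allR: "\<forall>k\<le>n. k \<in> R"
    proof (rule ccontr)
      assume "\<not> (\<forall>k\<le>n. k \<in> R)"
      then obtain k where kn: "k \<le> n" and kR: "k \<notin> R" by auto
      define C where "C = {i. i \<le> n \<and> i \<notin> R}"
      define P where "P = {(i,j). i \<le> n \<and> j \<le> n \<and> i \<notin> R \<and> j \<in> R}"
      have fP: "finite P" unfolding P_def by (rule finite_subset[of _ "{0..n} \<times> {0..n}"]) auto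
      have gap: "\<forall>p\<in>P. 0 < dist (x (fst p)) (x (snd p)) - norm (z (fst p) - z (snd p))"
      proof
        fix p assume "p \<in> P"
        then obtain i j where p: "p = (i,j)" and i: "i \<le> n" "i \<notin> R" and j: "j \<le> n" "j \<in> R"
          unfolding P_def by auto
        have "norm (z i - z j) \<noteq> dist (x i) (x j)"
        proof
          assume "norm (z i - z j) = dist (x i) (x j)"
          hence "(j,i) \<in> E" using i j unfolding E_def by (simp add: norm_minus_commute dist_commute)
          hence "(0,i) \<in> E\<^sup>*" using j unfolding R_def by auto
          thus False using i unfolding R_def by auto
        qed
        thus "0 < dist (x (fst p)) (x (snd p)) - norm (z (fst p) - z (snd p))"
          using zl[OF i(1) j(1)] p by simp
      qed
      obtain e where e0: "e > 0" and eP: "\<forall>p\<in>P. e \<le> dist (x (fst p)) (x (snd p)) - norm (z (fst p) - z (snd p))"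
        using fin_pos[OF fP gap] by auto
      have zR: "0 \<in> R" unfolding R_def by auto
      define s where "s = (\<lambda>c::real. \<lambda>i. t i + (if i \<in> C then c else 0))"
      have sD: "s c \<in> D" if c: "\<bar>c\<bar> \<le> e" for c
        unfolding memD
      proof (intro conjI allI impI)
        fix i assume "n < i" thus "s c i = 0" using tD unfolding s_def C_def memD by auto
      next
        show "s c 0 = 0" using tD zR unfolding s_def C_def memD by auto
      next
        fix i j assume i: "i \<le> n" and j: "j \<le> n"
        have eq: "(y i + s c i *\<^sub>R v) - (y j + s c j *\<^sub>R v) = (z i - z j) + ((if i \<in> C then c else 0) - (if j \<in> C then c else 0)) *\<^sub>R v"
          unfolding s_def z_def by (simp add: algebra_simps)
        show "norm ((y i + s c i *\<^sub>R v) - (y j + s c j *\<^sub>R v)) \<le> dist (x i) (x j)"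
        proof (cases "(i \<in> C) = (j \<in> C)")
          case True thus ?thesis unfolding eq using zl[OF i j] by auto
        next
          case False
          note ne = False
          have "norm ((y i + s c i *\<^sub>R v) - (y j + s c j *\<^sub>R v)) \<le> norm (z i - z j) + \<bar>c\<bar>"
            unfolding eq using False nv norm_triangle_ineq[of "z i - z j" "c *\<^sub>R v"] norm_triangle_ineq4[of "z i - z j" "c *\<^sub>R v"]
            by (auto split: if_splits)
          moreover have "e \<le> dist (x i) (x j) - norm (z i - z j)"
          proof (cases "i \<in> C")
            case True
            hence "(i,j) \<in> P" using ne i j unfolding P_def C_def by auto
            thus ?thesis using eP by fastforce
          next
            case False
            hence "(j,i) \<in> P" using ne i j unfolding P_def C_def by auto
            thus ?thesis using eP by (fastforce simp: norm_minus_commute dist_commute)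
          qed
          ultimately show ?thesis using c by simp
        qed
      qed
      have kC: "k \<in> C" using kn kR unfolding C_def by auto
      have "t = (\<lambda>i. (1 - 1/2) *\<^sub>R s e i + (1/2::real) *\<^sub>R s (-e) i)"
        unfolding s_def by (rule ext) (simp add: field_simps)
      note teq = this
      have h1: "s e \<in> D" and h2: "s (-e) \<in> D" using sD e0 by auto
      from te have "\<forall>a\<in>D. \<forall>b\<in>D. \<forall>u::real. 0<u \<longrightarrow> u<1 \<longrightarrow> t = (\<lambda>i. (1-u) *\<^sub>R a i + u *\<^sub>R b i) \<longrightarrow> a = b"
        unfolding tuple_extreme_point_def by blast
      note ex = this
      have "s e = s (-e)" using ex[rule_format, OF h1 h2, of "1/2"] teq by simp
      hence "s e k = s (-e) k" by simp
      thus False using kC e0 unfolding s_def by simp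
    qed
    show ?thesis
      unfolding tuple_extreme_point_def
    proof (intro conjI ballI allI impI)
      show "(\<lambda>i. y i + t i *\<^sub>R v) \<in> Lip10 x n" using zL z_def by simp
    next
      fix a b and u :: real
      assume aL: "a \<in> Lip10 x n" and bL: "b \<in> Lip10 x n" and u: "0 < u" "u < 1"
        and zc: "(\<lambda>i. y i + t i *\<^sub>R v) = (\<lambda>i. (1 - u) *\<^sub>R a i + u *\<^sub>R b i)"
      have zi: "z i = (1 - u) *\<^sub>R a i + u *\<^sub>R b i" for i using zc unfolding z_def by metis
      have al: "\<And>i j. i \<le> n \<Longrightarrow> j \<le> n \<Longrightarrow> norm (a i - a j) \<le> dist (x i) (x j)"
        and a0: "a 0 = 0" and an: "\<And>i. n < i \<Longrightarrow> a i = 0"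
        using aL unfolding Lip10_def by auto
      have bl: "\<And>i j. i \<le> n \<Longrightarrow> j \<le> n \<Longrightarrow> norm (b i - b j) \<le> dist (x i) (x j)"
        and b0: "b 0 = 0" and bn: "\<And>i. n < i \<Longrightarrow> b i = 0"
        using bL unfolding Lip10_def by auto
      have stepE: "a i - z i = a j - z j" if ij: "(i,j) \<in> E" for i j
      proof (cases "i = j")
        case True thus ?thesis by simp
      next
        case False
        have i: "i \<le> n" and j: "j \<le> n" and tt: "norm (z i - z j) = dist (x i) (x j)"
          using ij unfolding E_def by auto
        have "x i \<noteq> x j" using inj False i j unfolding inj_on_def by auto
        hence d: "dist (x i) (x j) > 0" by simp
        define dd where "dd = dist (x i) (x j)"
        have dd: "dd > 0" using d dd_def by simp
        have "(a i - a j) /\<^sub>R dd = (b i - b j) /\<^sub>R dd"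
        proof (rule sc_comb[OF sc _ _ u])
          have "norm ((a i - a j) /\<^sub>R dd) = inverse dd * norm (a i - a j)" unfolding norm_scaleR using dd by simp
          also have "\<dots> \<le> inverse dd * dd" using al[OF i j] dd unfolding dd_def by (intro mult_left_mono) auto
          also have "\<dots> = 1" using dd by simp
          finally show "norm ((a i - a j) /\<^sub>R dd) \<le> 1" .
          have "norm ((b i - b j) /\<^sub>R dd) = inverse dd * norm (b i - b j)" unfolding norm_scaleR using dd by simp
          also have "\<dots> \<le> inverse dd * dd" using bl[OF i j] dd unfolding dd_def by (intro mult_left_mono) auto
          also have "\<dots> = 1" using dd by simp
          finally show "norm ((b i - b j) /\<^sub>R dd) \<le> 1" .
          have "(1 - u) *\<^sub>R ((a i - a j) /\<^sub>R dd) + u *\<^sub>R ((b i - b j) /\<^sub>R dd) = (z i - z j) /\<^sub>R dd"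
            unfolding zi by (simp add: algebra_simps)
          thus "norm ((1 - u) *\<^sub>R ((a i - a j) /\<^sub>R dd) + u *\<^sub>R ((b i - b j) /\<^sub>R dd)) = 1"
            using tt dd unfolding dd_def by simp
        qed
        hence ab: "a i - a j = b i - b j" using dd by simp
        have "z i - z j = (1-u) *\<^sub>R (a i - a j) + u *\<^sub>R (b i - b j)" unfolding zi by (simp add: algebra_simps)
        also have "\<dots> = a i - a j" unfolding ab by (simp add: algebra_simps)
        finally show ?thesis by (simp add: algebra_simps)
      qed
      have w0: "a k - z k = 0" if "k \<in> R" for k
      proof -
        have "(0,k) \<in> E\<^sup>*" using that unfolding R_def by auto
        thus ?thesis
        proof (induction rule: rtrancl_induct)
          case base thus ?case using a0 zi b0 by simp
        next
          case (step j k) thus ?case using stepE[of j k] by simp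
        qed
      qed
      have az: "a = z"
      proof
        fix i show "a i = z i"
        proof (cases "i \<le> n")
          case True thus ?thesis using w0 allR by auto
        next
          case False thus ?thesis using an bn zi by simp
        qed
      qed
      have "b = z"
      proof
        fix i
        have "z i = (1-u) *\<^sub>R z i + u *\<^sub>R b i" using zi[of i] az by simp
        hence "u *\<^sub>R b i = z i - (1-u) *\<^sub>R z i" by (metis add_diff_cancel_left')
        also have "\<dots> = u *\<^sub>R z i" by (simp add: algebra_simps)
        finally have "u *\<^sub>R b i = u *\<^sub>R z i" .
        hence "inverse u *\<^sub>R (u *\<^sub>R b i) = inverse u *\<^sub>R (u *\<^sub>R z i)" by simp
        thus "b i = z i" using u(1) by simp
      qed
      thus "a = b" using az by simp
    qed
  qed
  show ?thesis using ne conv cpt sub ext by blast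
qed

end
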